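(* Let $d>1$ and $N\ge 1$. Suppose $x_1,\dots,x_N\in\mathbb{H}^d$ and $w_1,\dots,w_N\in\mathbb{R}$ satisfy: (1) $|x_i|^2=1$ for $i=1,\dots,N$; (2) $|\langle x_i,x_j\rangle|^2=|\langle x_{i'},x_{j'}\rangle|^2$ for all $1\le i<j\le N$ and $1\le i'<j'\le N$; (3) $\sum_{i=1}^N w_i x_ix_i^\dagger = I_d$. Then $w_1=\cdots=w_N=d/N$ and $\{x_1,\dots,x_N\}$ is a tight simplex in $\mathbb{H}\mathbb{P}^{d-1}$.
   Context: $\mathbb{H}$ denotes the quaternions; $\langle x,y\rangle=x^\dagger y$ on $\mathbb{H}^d$, with $\dagger$ the conjugate transpose. $\mathbb{H}\mathbb{P}^{d-1}$ is the space of quaternionic lines in $\mathbb{H}^d$ (scalars acting on the right), points represented by unit vectors. A tight simplex of $N$ points in $\mathbb{H}\mathbb{P}^{d-1}$ is a set of $N$ distinct points $x_1,\dots,x_N$ with $|\langle x_i,x_j\rangle|^2=\frac{N-d}{d(N-1)}$ for all $i\ne j$. *)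

theory Defs
  imports "HOL-Analysis.Analysis"
begin

datatype quat = Quat (qre: real) (qim_i: real) (qim_j: real) (qim_k: real)

fun qmul :: "quat \<Rightarrow> quat \<Rightarrow> quat" where
  "qmul (Quat a1 b1 c1 d1) (Quat a2 b2 c2 d2) =
     Quat (a1*a2 - b1*b2 - c1*c2 - d1*d2)
          (a1*b2 + b1*a2 + c1*d2 - d1*c2)
          (a1*c2 - b1*d2 + c1*a2 + d1*b2)
          (a1*d2 + b1*c2 - c1*b2 + d1*a2)"

fun qcnj :: "quat \<Rightarrow> quat" where
  "qcnj (Quat a b c d) = Quat a (-b) (-c) (-d)"

definition qscale :: "real \<Rightarrow> quat \<Rightarrow> quat" where
  "qscale r q = Quat (r * qre q) (r * qim_i q) (r * qim_j q) (r * qim_k q)"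

definition qnorm2 :: "quat \<Rightarrow> real" where
  "qnorm2 q = (qre q)^2 + (qim_i q)^2 + (qim_j q)^2 + (qim_k q)^2"

definition qsum :: "('a \<Rightarrow> quat) \<Rightarrow> 'a set \<Rightarrow> quat" where
  "qsum f A = Quat (\<Sum>a\<in>A. qre (f a)) (\<Sum>a\<in>A. qim_i (f a))
                   (\<Sum>a\<in>A. qim_j (f a)) (\<Sum>a\<in>A. qim_k (f a))"

definition qzero :: quat where "qzero = Quat 0 0 0 0"
definition qone :: quat where "qone = Quat 1 0 0 0"

text \<open>Vectors in H^d are functions from a finite index type 'd (with CARD('d) = d).
  Inner product <x,y> = x^dagger y = sum_k conj(x_k) y_k.\<close>
definition hinner :: "('d::finite \<Rightarrow> quat) \<Rightarrow> ('d \<Rightarrow> quat) \<Rightarrow> quat" where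
  "hinner x y = qsum (\<lambda>k. qmul (qcnj (x k)) (y k)) UNIV"

definition hnorm2 :: "('d::finite \<Rightarrow> quat) \<Rightarrow> real" where
  "hnorm2 x = (\<Sum>k\<in>UNIV. qnorm2 (x k))"

text \<open>The quaternionic line through x (scalars acting on the right): a point of HP^{d-1}.\<close>
definition hline :: "('d::finite \<Rightarrow> quat) \<Rightarrow> ('d \<Rightarrow> quat) set" where
  "hline x = {y. \<exists>q. y = (\<lambda>k. qmul (x k) q)}"

definition tight_simplex :: "nat \<Rightarrow> (nat \<Rightarrow> ('d::finite \<Rightarrow> quat)) \<Rightarrow> bool" where
  "tight_simplex N x \<longleftrightarrow>
     (\<forall>i<N. hnorm2 (x i) = 1) \<and>
     (\<forall>i<N. \<forall>j<N. i \<noteq> j \<longrightarrow> hline (x i) \<noteq> hline (x j)) \<and>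
     (\<forall>i<N. \<forall>j<N. i \<noteq> j \<longrightarrow>
        qnorm2 (hinner (x i) (x j)) =
          (real N - real CARD('d)) / (real CARD('d) * (real N - 1)))"

end

theory Submission
  imports Defs
begin

instantiation quat :: ring_1
begin
definition "0 = Quat 0 0 0 0"
definition "1 = Quat 1 0 0 0"
definition "a + b = Quat (qre a + qre b) (qim_i a + qim_i b) (qim_j a + qim_j b) (qim_k a + qim_k b)"
definition "a - b = Quat (qre a - qre b) (qim_i a - qim_i b) (qim_j a - qim_j b) (qim_k a - qim_k b)"
definition "- a = Quat (- qre a) (- qim_i a) (- qim_j a) (- qim_k a)"
definition "a * b = qmul a b"
instance
proof
  fix a b c :: quat
  show "a * b * c = a * (b * c)"
    by (cases a; cases b; cases c) (simp add: times_quat_def algebra_simps)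
  show "(a + b) * c = a * c + b * c"
    by (cases a; cases b; cases c) (simp add: times_quat_def plus_quat_def algebra_simps)
  show "a * (b + c) = a * b + a * c"
    by (cases a; cases b; cases c) (simp add: times_quat_def plus_quat_def algebra_simps)
  show "a + b + c = a + (b + c)"
    by (simp add: plus_quat_def algebra_simps)
  show "a + b = b + a"
    by (simp add: plus_quat_def algebra_simps)
  show "0 + a = a"
    by (cases a) (simp add: plus_quat_def zero_quat_def)
  show "- a + a = 0"
    by (cases a) (simp add: plus_quat_def zero_quat_def uminus_quat_def)
  show "a - b = a + - b"
    by (simp add: plus_quat_def minus_quat_def uminus_quat_def)
  show "1 * a = a"
    by (cases a) (simp add: one_quat_def times_quat_def)
  show "a * 1 = a"
    by (cases a) (simp add: one_quat_def times_quat_def)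
  show "(0::quat) \<noteq> 1" by (simp add: zero_quat_def one_quat_def)
qed
end

lemma qre_sum: "qre (sum f A) = (\<Sum>a\<in>A. qre (f a))"
  and qi_sum: "qim_i (sum f A) = (\<Sum>a\<in>A. qim_i (f a))"
  and qj_sum: "qim_j (sum f A) = (\<Sum>a\<in>A. qim_j (f a))"
  and qk_sum: "qim_k (sum f A) = (\<Sum>a\<in>A. qim_k (f a))"
  by (induction A rule: infinite_finite_induct) (auto simp: zero_quat_def plus_quat_def)

lemma qsum_eq: "qsum f A = sum f A"
  unfolding qsum_def by (rule quat.expand) (simp add: qre_sum qi_sum qj_sum qk_sum)

definition R :: "real \<Rightarrow> quat" where "R r = Quat r 0 0 0"

lemma qscale_eq: "qscale r q = R r * q"
  by (cases q) (simp add: qscale_def R_def times_quat_def)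

lemma qre_R: "qre (R r) = r" by (simp add: R_def)

lemma R_comm: "q * R r = R r * q"
  by (cases q) (simp add: R_def times_quat_def)

lemma R_mult: "R a * R b = R (a*b)" by (simp add: R_def times_quat_def)
lemma R_sum: "sum (\<lambda>i. R (f i)) A = R (sum f A)"
  by (rule quat.expand) (simp add: qre_sum qi_sum qj_sum qk_sum R_def)
lemma R_1: "R 1 = 1" by (simp add: R_def one_quat_def)
lemma qre_R_mult: "qre (R r * q) = r * qre q"
  by (cases q) (simp add: R_def times_quat_def)

lemma qcnj_add: "qcnj (a + b) = qcnj a + qcnj b"
  by (cases a; cases b) (simp add: plus_quat_def)
lemma qcnj_zero: "qcnj 0 = 0" by (simp add: zero_quat_def)
lemma qcnj_sum: "qcnj (sum f A) = (\<Sum>a\<in>A. qcnj (f a))"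
  by (induction A rule: infinite_finite_induct) (auto simp: qcnj_zero qcnj_add)
lemma qcnj_mult: "qcnj (a * b) = qcnj b * qcnj a"
  by (cases a; cases b) (simp add: times_quat_def algebra_simps)
lemma qcnj_qcnj: "qcnj (qcnj a) = a" by (cases a) simp
lemma qnorm2_re: "qnorm2 q = qre (qcnj q * q)"
  by (cases q) (simp add: qnorm2_def times_quat_def power2_eq_square)
lemma qnorm2_cnj: "qnorm2 (qcnj q) = qnorm2 q"
  by (cases q) (simp add: qnorm2_def)
lemma qnorm2_mult: "qnorm2 (a * b) = qnorm2 a * qnorm2 b"
  by (cases a; cases b) (simp add: qnorm2_def times_quat_def power2_eq_square algebra_simps)
lemma cnj_self: "qcnj q * q = R (qnorm2 q)"
  by (cases q) (simp add: qnorm2_def times_quat_def R_def power2_eq_square algebra_simps)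
lemma self_cnj: "q * qcnj q = R (qnorm2 q)"
  by (cases q) (simp add: qnorm2_def times_quat_def R_def power2_eq_square algebra_simps)
lemma qnorm2_R: "qnorm2 (R r) = r^2" by (simp add: qnorm2_def R_def)

lemma hinner_eq: "hinner x y = (\<Sum>k\<in>UNIV. qcnj (x k) * y k)"
  by (simp add: hinner_def qsum_eq times_quat_def)

lemma hinner_swap: "hinner y x = qcnj (hinner x y)"
  by (simp add: hinner_eq qcnj_sum qcnj_mult qcnj_qcnj)

lemma hinner_self: "hinner x x = R (hnorm2 x)"
  by (simp add: hinner_eq cnj_self R_sum hnorm2_def)

lemma keyA:
  fixes x :: "nat \<Rightarrow> ('d::finite \<Rightarrow> quat)"
  assumes fr: "\<And>k l. (\<Sum>i<N. R (w i) * (x i k * qcnj (x i l))) = (if k = l then 1 else 0)"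
  shows "(\<Sum>i<N. w i * qnorm2 (hinner (x i) y)) = hnorm2 y"
proof -
  have e1: "R (w i) * (qcnj (hinner (x i) y) * hinner (x i) y)
     = (\<Sum>k\<in>UNIV. \<Sum>l\<in>UNIV. qcnj (y k) * (R (w i) * (x i k * qcnj (x i l))) * y l)" for i
  proof -
    have "R (w i) * (qcnj (hinner (x i) y) * hinner (x i) y)
      = R (w i) * ((\<Sum>k\<in>UNIV. qcnj (y k) * x i k) * (\<Sum>l\<in>UNIV. qcnj (x i l) * y l))"
      by (simp add: hinner_eq qcnj_sum qcnj_mult qcnj_qcnj)
    also have "\<dots> = (\<Sum>k\<in>UNIV. \<Sum>l\<in>UNIV. R (w i) * (qcnj (y k) * x i k * (qcnj (x i l) * y l)))"
      by (simp add: sum_distrib_left sum_distrib_right) (rule sum.swap)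
    also have "\<dots> = (\<Sum>k\<in>UNIV. \<Sum>l\<in>UNIV. qcnj (y k) * (R (w i) * (x i k * qcnj (x i l))) * y l)"
    proof (intro sum.cong refl)
      fix k l
      have "R (w i) * (qcnj (y k) * x i k * (qcnj (x i l) * y l)) = (R (w i) * qcnj (y k)) * (x i k * qcnj (x i l)) * y l"
        by (simp add: mult.assoc)
      also have "\<dots> = qcnj (y k) * (R (w i) * (x i k * qcnj (x i l))) * y l"
        by (simp add: R_comm[symmetric] mult.assoc)
      finally show "R (w i) * (qcnj (y k) * x i k * (qcnj (x i l) * y l)) = qcnj (y k) * (R (w i) * (x i k * qcnj (x i l))) * y l" .
    qed
    finally show ?thesis .
  qed
  have A: "(\<Sum>i<N. w i * qnorm2 (hinner (x i) y)) = qre (\<Sum>i<N. R (w i) * (qcnj (hinner (x i) y) * hinner (x i) y))"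
    by (simp add: qre_sum qre_R_mult qnorm2_re)
  have "(\<Sum>i<N. R (w i) * (qcnj (hinner (x i) y) * hinner (x i) y))
     = (\<Sum>k\<in>UNIV. \<Sum>l\<in>UNIV. qcnj (y k) * (\<Sum>i<N. R (w i) * (x i k * qcnj (x i l))) * y l)"
    by (simp add: e1 sum_distrib_left sum_distrib_right sum.swap[of _ "{..<N}"])
  also have "\<dots> = (\<Sum>k\<in>UNIV. \<Sum>l\<in>UNIV. (if k = l then qcnj (y k) * y l else 0))"
    by (intro sum.cong refl) (simp add: fr)
  also have "\<dots> = hinner y y" by (simp add: hinner_eq)
  finally show ?thesis using A by (simp add: hinner_self R_def)
qed

theorem proposition4p1:
  fixes N :: nat
    and x :: "nat \<Rightarrow> ('d::finite \<Rightarrow> quat)"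
    and w :: "nat \<Rightarrow> real"
  assumes d_gt: "CARD('d) > 1"
    and N_ge: "N \<ge> 1"
    and unit: "\<forall>i<N. hnorm2 (x i) = 1"
    and equi: "\<forall>i j i' j'. i < j \<and> j < N \<and> i' < j' \<and> j' < N \<longrightarrow>
                 qnorm2 (hinner (x i) (x j)) = qnorm2 (hinner (x i') (x j'))"
    and frame: "\<forall>k l. qsum (\<lambda>i. qscale (w i) (qmul (x i k) (qcnj (x i l)))) {..<N}
                   = (if k = l then qone else qzero)"
  shows "(\<forall>i<N. w i = real CARD('d) / real N) \<and> tight_simplex N x"
proof -
  define d where "d = real CARD('d)"
  have d1: "d > 1" using d_gt by (simp add: d_def)
  have fr: "\<And>k l. (\<Sum>i<N. R (w i) * (x i k * qcnj (x i l))) = (if k = l then 1 else 0)"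
    using frame by (simp add: qsum_eq qscale_eq times_quat_def one_quat_def zero_quat_def qone_def qzero_def)
  have diag: "(\<Sum>i<N. w i * qnorm2 (x i k)) = 1" for k
  proof -
    have "qre (\<Sum>i<N. R (w i) * (x i k * qcnj (x i k))) = 1"
      using fr[of k k] by (simp add: one_quat_def)
    thus ?thesis by (simp add: qre_sum self_cnj qre_R_mult qre_R)
  qed
  have "(\<Sum>i<N. w i * hnorm2 (x i)) = (\<Sum>k\<in>UNIV. \<Sum>i<N. w i * qnorm2 (x i k))"
    by (simp add: hnorm2_def sum_distrib_left) (rule sum.swap)
  also have "\<dots> = d" by (simp add: diag d_def)
  finally have trace0: "(\<Sum>i<N. w i * hnorm2 (x i)) = d" .
  have trace: "(\<Sum>i<N. w i) = d"
    using trace0 unit by (metis (no_types, lifting) lessThan_iff mult.right_neutral sum.cong)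
  define q where "q i j = qnorm2 (hinner (x i) (x j))" for i j
  have qjj: "q j j = 1" if "j < N" for j
    using unit that by (simp add: q_def hinner_self qnorm2_R)
  have qsym: "q i j = q j i" for i j
    by (simp add: q_def hinner_swap[of "x i" "x j"] qnorm2_cnj)
  have rowsum: "(\<Sum>i<N. w i * q i j) = 1" if "j < N" for j
    using keyA[OF fr, of "x j"] unit that by (simp add: q_def)
  have N2: "N \<ge> 2"
  proof (rule ccontr)
    assume "\<not> N \<ge> 2"
    hence "N = 1" using N_ge by simp
    hence "w 0 = 1" "w 0 = d" using rowsum[of 0] qjj[of 0] trace by auto
    thus False using d1 by simp
  qed
  define c where "c = q 0 1"
  have qc: "q i j = c" if "i < N" "j < N" "i \<noteq> j" for i j
  proof (cases "i < j")
    case True thus ?thesis using equi[rule_format, of i j 0 1] that N2 by (simp add: c_def q_def)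
  next
    case False
    hence "j < i" using that by simp
    thus ?thesis using equi[rule_format, of j i 0 1] that N2 qsym[of i j] by (simp add: c_def q_def)
  qed
  have eqj: "w j + c * (d - w j) = 1" if "j < N" for j
  proof -
    have "1 = (\<Sum>i<N. w i * q i j)" using rowsum that by simp
    also have "\<dots> = w j * q j j + (\<Sum>i\<in>{..<N}-{j}. w i * q i j)"
      using that by (simp add: sum.remove)
    also have "(\<Sum>i\<in>{..<N}-{j}. w i * q i j) = (\<Sum>i\<in>{..<N}-{j}. c * w i)"
      using qc that by (intro sum.cong) auto
    also have "\<dots> = c * (d - w j)"
      using that trace by (simp add: sum_distrib_left[symmetric] sum_diff1)
    finally show ?thesis using qjj that by simp
  qed
  have c1: "c \<noteq> 1"
  proof
    assume "c = 1"
    thus False using eqj[of 0] N2 d1 by simp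
  qed
  have wj: "w j = (1 - c * d) / (1 - c)" if "j < N" for j
    using eqj[OF that] c1 by (simp add: field_simps)
  have "d = (\<Sum>i<N. (1 - c * d) / (1 - c))" using trace wj by simp
  hence dN: "d = real N * ((1 - c * d) / (1 - c))" by simp
  have wval: "w j = d / real N" if "j < N" for j
  proof -
    have "real N \<noteq> 0" using N2 by simp
    hence "d / real N = (1 - c * d) / (1 - c)" by (subst dN) simp
    thus ?thesis using wj[OF that] by simp
  qed
  have cval: "c = (real N - d) / (d * (real N - 1))"
  proof -
    have "d / real N + c * (d - d / real N) = 1" using eqj[of 0] wval[of 0] N2 by simp
    hence "d + c * (d * real N - d) = real N" using N2 by (simp add: field_simps)
    moreover have "d * (real N - 1) > 0" using d1 N2 by simp
    ultimately show ?thesis using d1 N2 by (simp add: eq_divide_eq algebra_simps)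
  qed
  have distinct: "hline (x i) \<noteq> hline (x j)" if "i < N" "j < N" "i \<noteq> j" for i j
  proof
    assume h: "hline (x i) = hline (x j)"
    have "x i \<in> hline (x i)" unfolding hline_def
      by (rule CollectI, rule exI[of _ qone]) (simp add: times_quat_def[symmetric] qone_def one_quat_def[symmetric])
    with h obtain p where p: "x i = (\<lambda>k. x j k * p)"
      unfolding hline_def by (auto simp: times_quat_def)
    have "1 = hnorm2 (x i)" using unit that by simp
    also have "\<dots> = hnorm2 (x j) * qnorm2 p" by (simp add: p hnorm2_def qnorm2_mult sum_distrib_right)
    finally have p1: "qnorm2 p = 1" using unit that by simp
    have "hinner (x j) (x i) = hinner (x j) (x j) * p"
      by (simp add: p hinner_eq sum_distrib_right mult.assoc)
    also have "\<dots> = p" using unit that by (simp add: hinner_self R_1)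
    finally have "q j i = 1" using p1 by (simp add: q_def)
    thus False using qc[of j i] that c1 by simp
  qed
  show ?thesis
    unfolding tight_simplex_def
    using wval unit distinct qc cval by (auto simp: d_def q_def)
qed

end
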